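(* Let $r\ge 4$ and let $w:E(K_r)\to\mathbb{R}_{>0}$ be a positive edge-weighting of the complete graph $K_r$ on vertex set $U$ which is vertex-induced, i.e. there is $a:U\to\mathbb{R}_{\ge0}$ with $w(uv)=\frac{a(u)+a(v)}{2}$ for all edges $uv$. For each edge $e$ let $C_w(e)$ be the maximum of $w(C)=\sum_{f\in E(C)}w(f)$ over all cycles $C$ of $K_r$ containing $e$. Then $$\sum_{e\in E(K_r)}\frac{w(e)}{C_w(e)}=\frac{r-1}{2}.$$ *)

theory Defs
  imports Complex_Main
begin

definition Kedges :: "'a set \<Rightarrow> 'a set set" where
  "Kedges U = {e. \<exists>u v. u \<in> U \<and> v \<in> U \<and> u \<noteq> v \<and> e = {u, v}}"

text \<open>A cycle of the complete graph on U, given as the cyclic list of its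
  (pairwise distinct) vertices, of length at least 3.\<close>
definition is_cycle :: "'a set \<Rightarrow> 'a list \<Rightarrow> bool" where
  "is_cycle U vs \<longleftrightarrow> distinct vs \<and> set vs \<subseteq> U \<and> length vs \<ge> 3"

definition cycle_edges :: "'a list \<Rightarrow> 'a set set" where
  "cycle_edges vs = {{vs ! i, vs ! ((i + 1) mod length vs)} | i. i < length vs}"

definition cycle_weight :: "('a set \<Rightarrow> real) \<Rightarrow> 'a list \<Rightarrow> real" where
  "cycle_weight w vs = (\<Sum>f\<in>cycle_edges vs. w f)"

definition Cw :: "'a set \<Rightarrow> ('a set \<Rightarrow> real) \<Rightarrow> 'a set \<Rightarrow> real" where
  "Cw U w e = Max {cycle_weight w vs | vs. is_cycle U vs \<and> e \<in> cycle_edges vs}"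

end

theory Submission
  imports Defs
begin

lemma succ_mod: "i < (n::nat) \<Longrightarrow> (i+1) mod n = (if i+1=n then 0 else i+1)"
  by auto

lemma l1: "\<lbrakk>(i::nat) = (if j+1=n then 0 else j+1); (if i+1=n then 0 else i+1) = j; 3 \<le> n\<rbrakk> \<Longrightarrow> False"
  by (auto split: if_split_asm)
lemma l2: "\<lbrakk>(if (x::nat)+1=n then 0 else x+1) = (if y+1=n then (0::nat) else y+1); x < n; y < n\<rbrakk> \<Longrightarrow> x = y"
  by (auto split: if_split_asm)
lemma l3: "\<lbrakk>3 \<le> n\<rbrakk> \<Longrightarrow> (i::nat) \<noteq> (if i+1=n then 0 else i+1)"
  by (auto split: if_split_asm)

lemma succ_inj: "inj_on (\<lambda>i. (i+1) mod (n::nat)) {..<n}"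
proof (rule inj_onI)
  fix x y assume x: "x \<in> {..<n}" and y: "y \<in> {..<n}" and e: "(x+1) mod n = (y+1) mod n"
  have C: "(x+1) mod n = (if x+1=n then 0 else x+1)" and D: "(y+1) mod n = (if y+1=n then 0 else y+1)"
    using x y by (auto simp del: mod_Suc simp add: succ_mod)
  have "(if x+1=n then 0 else x+1) = (if y+1=n then (0::nat) else y+1)" using C D e by (simp only:)
  from l2[OF this] x y show "x = y" by simp
qed

lemma cyc_weight:
  assumes d: "distinct vs" and l: "length vs \<ge> 3" and s: "set vs \<subseteq> U"
    and W: "\<forall>u\<in>U. \<forall>v\<in>U. u \<noteq> v \<longrightarrow> w {u, v} = (a u + a v) / 2"
  shows "cycle_weight w vs = sum a (set vs)"
proof -
  define n where "n = length vs"
  define f where "f i = {vs!i, vs!((i+1) mod n)}" for i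
  have ce: "cycle_edges vs = f ` {..<n}"
    unfolding cycle_edges_def f_def n_def by auto
  have nidx: "\<And>i j. i < n \<Longrightarrow> j < n \<Longrightarrow> vs!i = vs!j \<longleftrightarrow> i = j"
    using d n_def nth_eq_iff_index_eq by blast
  have inj: "inj_on f {..<n}"
  proof
    fix i j assume i: "i \<in> {..<n}" and j: "j \<in> {..<n}" and e: "f i = f j"
    have si: "(i+1) mod n < n" and sj: "(j+1) mod n < n" using i j by auto
    show "i = j"
    proof (rule ccontr)
      assume ne: "i \<noteq> j"
      hence "vs!i \<noteq> vs!j" using nidx i j by auto
      with e have "vs!i = vs!((j+1) mod n) \<and> vs!((i+1) mod n) = vs!j"
        unfolding f_def by (auto simp: doubleton_eq_iff)
      hence A: "i = (j+1) mod n" and B: "(i+1) mod n = j" using nidx i j si sj by auto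
      have C: "(j+1) mod n = (if j+1=n then 0 else j+1)" and D: "(i+1) mod n = (if i+1=n then 0 else i+1)"
        using i j by (auto simp del: mod_Suc simp add: succ_mod)
      have E: "i = (if j+1=n then 0 else j+1)" using A C by (simp only:)
      have F: "(if i+1=n then 0 else i+1) = j" using B D by (simp only:)
      have n3: "3 \<le> n" using l n_def by simp
      show False using l1[OF E F n3] .
    qed
  qed
  have fw: "w (f i) = (a (vs!i) + a (vs!((i+1) mod n))) / 2" if i: "i < n" for i
  proof -
    have D: "(i+1) mod n = (if i+1=n then 0 else i+1)"
      using i by (auto simp del: mod_Suc simp add: succ_mod)
    have n3: "3 \<le> n" using l n_def by simp
    have "i \<noteq> (i+1) mod n" unfolding D using l3[OF n3] .
    hence neq: "vs!i \<noteq> vs!((i+1) mod n)" using nidx i by auto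
    have im: "(i+1) mod n < n" using i by simp
    moreover have "vs!i \<in> U" "vs!((i+1) mod n) \<in> U" using s i n_def im
      by (auto intro!: subsetD[OF s] nth_mem)
    ultimately show ?thesis using neq W[rule_format, of "vs!i" "vs!((i+1) mod n)"] unfolding f_def by simp
  qed
  have bij: "bij_betw (\<lambda>i. (i+1) mod n) {..<n} {..<n}"
  proof -
    have "inj_on (\<lambda>i. (i+1) mod n) {..<n}"
      by (rule succ_inj)
    moreover have "(\<lambda>i. (i+1) mod n) ` {..<n} \<subseteq> {..<n}"
    proof -
      have "0 < n" using l n_def by linarith
      thus ?thesis by (auto simp del: mod_Suc)
    qed
    ultimately show ?thesis
      by (simp add: bij_betw_def endo_inj_surj)
  qed
  have r1: "(\<Sum>i<n. a (vs!((i+1) mod n))) = (\<Sum>i<n. a (vs!i))"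
    using sum.reindex_bij_betw[OF bij, of "\<lambda>i. a (vs!i)"] by simp
  have r2: "sum a (set vs) = (\<Sum>i<n. a (vs!i))"
  proof -
    have "set vs = (\<lambda>i. vs!i) ` {..<n}" by (auto simp: n_def set_conv_nth)
    moreover have "inj_on (\<lambda>i. vs!i) {..<n}" using nidx by (auto intro: inj_onI)
    ultimately show ?thesis by (simp add: sum.reindex)
  qed
  have "cycle_weight w vs = (\<Sum>i<n. w (f i))"
    unfolding cycle_weight_def ce using sum.reindex[OF inj, of w] by simp
  also have "\<dots> = (\<Sum>i<n. (a (vs!i) + a (vs!((i+1) mod n))) / 2)"
    by (rule sum.cong) (auto simp: fw)
  also have "\<dots> = ((\<Sum>i<n. a (vs!i)) + (\<Sum>i<n. a (vs!((i+1) mod n)))) / 2"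
    by (simp add: sum.distrib sum_divide_distrib[symmetric])
  also have "\<dots> = sum a (set vs)" using r1 r2 by simp
  finally show ?thesis .
qed

lemma Cw_val:
  assumes fin: "finite U" and c3: "card U \<ge> 3" and nn: "\<forall>u\<in>U. a u \<ge> 0"
    and W: "\<forall>u\<in>U. \<forall>v\<in>U. u \<noteq> v \<longrightarrow> w {u, v} = (a u + a v) / 2"
    and e: "e \<in> Kedges U"
  shows "Cw U w e = sum a U"
proof -
  obtain u v where u: "u \<in> U" and v: "v \<in> U" and uv: "u \<noteq> v" and ed: "e = {u, v}"
    using e unfolding Kedges_def by blast
  define S where "S = {cycle_weight w vs | vs. is_cycle U vs \<and> e \<in> cycle_edges vs}"
  have le: "y \<le> sum a U" if yS: "y \<in> S" for y
  proof -
    obtain vs where c: "is_cycle U vs" and y: "y = cycle_weight w vs"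
      using yS unfolding S_def by blast
    have "y = sum a (set vs)" using y cyc_weight[of vs U w a] c W unfolding is_cycle_def by auto
    also have "\<dots> \<le> sum a U"
      using c nn fin unfolding is_cycle_def by (intro sum_mono2) auto
    finally show ?thesis .
  qed
  have finS: "finite S"
  proof (rule finite_subset)
    show "S \<subseteq> (sum a) ` Pow U"
    proof
      fix y assume "y \<in> S"
      then obtain vs where c: "is_cycle U vs" and y: "y = cycle_weight w vs"
        unfolding S_def by blast
      have "y = sum a (set vs)" using y cyc_weight[of vs U w a] c W unfolding is_cycle_def by auto
      moreover have "set vs \<in> Pow U" using c unfolding is_cycle_def by auto
      ultimately show "y \<in> (sum a) ` Pow U" by blast
    qed
    show "finite ((sum a) ` Pow U)" using fin by simp
  qed
  have mem: "sum a U \<in> S"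
  proof -
    obtain xs where xs: "set xs = U - {u, v}" "distinct xs"
      using finite_distinct_list[of "U - {u, v}"] fin by blast
    define vs where "vs = u # v # xs"
    have dvs: "distinct vs" using xs uv unfolding vs_def by auto
    have svs: "set vs = U" using xs u v unfolding vs_def by auto
    have lvs: "length vs = card U" using distinct_card[OF dvs] svs by simp
    have cyc: "is_cycle U vs" unfolding is_cycle_def using dvs svs lvs c3 by simp
    have "1 mod length vs = 1" using lvs c3 by simp
    hence "{vs ! 0, vs ! ((0 + 1) mod length vs)} = e" unfolding vs_def ed by simp
    moreover have "0 < length vs" using lvs c3 by simp
    ultimately have "e \<in> cycle_edges vs" unfolding cycle_edges_def by blast
    moreover have "cycle_weight w vs = sum a U"
      using cyc_weight[of vs U w a] dvs svs lvs c3 W by simp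
    ultimately show ?thesis unfolding S_def using cyc by force
  qed
  have "Max S = sum a U" by (rule Max_eqI[OF finS le mem])
  thus ?thesis unfolding Cw_def S_def .
qed

lemma edge_sum:
  assumes fin: "finite U"
    and W: "\<forall>u\<in>U. \<forall>v\<in>U. u \<noteq> v \<longrightarrow> w {u, v} = (a u + a v) / 2"
  shows "(\<Sum>e\<in>Kedges U. w e) = (real (card U) - 1) / 2 * sum a U"
proof -
  have finK: "finite (Kedges U)"
    by (rule finite_subset[of _ "Pow U"]) (use fin in \<open>auto simp: Kedges_def\<close>)
  have we: "w e = (\<Sum>x\<in>{x. x \<in> U \<and> x \<in> e}. a x) / 2" if eK: "e \<in> Kedges U" for e
  proof -
    obtain u v where u: "u \<in> U" and v: "v \<in> U" and uv: "u \<noteq> v" and ed: "e = {u, v}"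
      using eK unfolding Kedges_def by blast
    have "{x. x \<in> U \<and> x \<in> e} = {u, v}" using u v ed by auto
    thus ?thesis using W u v uv ed by simp
  qed
  have cnt: "card {e. e \<in> Kedges U \<and> x \<in> e} = card U - 1" if x: "x \<in> U" for x
  proof -
    have "{e. e \<in> Kedges U \<and> x \<in> e} = (\<lambda>v. {x, v}) ` (U - {x})"
      using x unfolding Kedges_def by (auto simp: doubleton_eq_iff)
    moreover have "inj_on (\<lambda>v. {x, v}) (U - {x})"
      by (rule inj_onI) (auto simp: doubleton_eq_iff)
    ultimately show ?thesis using fin x by (simp add: card_image card_Diff_singleton)
  qed
  have "(\<Sum>e\<in>Kedges U. w e) = (\<Sum>e\<in>Kedges U. (\<Sum>x\<in>{x. x \<in> U \<and> x \<in> e}. a x) / 2)"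
    by (rule sum.cong) (auto simp: we)
  also have "\<dots> = (\<Sum>e\<in>Kedges U. (\<Sum>x\<in>{x. x \<in> U \<and> x \<in> e}. a x)) / 2"
    by (simp add: sum_divide_distrib)
  also have "(\<Sum>e\<in>Kedges U. (\<Sum>x\<in>{x. x \<in> U \<and> x \<in> e}. a x))
      = (\<Sum>x\<in>U. (\<Sum>e\<in>{e. e \<in> Kedges U \<and> x \<in> e}. a x))"
    using sum.swap_restrict[OF finK fin, of "\<lambda>e x. a x" "\<lambda>e x. x \<in> e"] by simp
  also have "\<dots> = (\<Sum>x\<in>U. a x * real (card U - 1))"
    by (rule sum.cong) (auto simp: cnt)
  also have "\<dots> = real (card U - 1) * sum a U"
    by (simp add: sum_distrib_right mult.commute)
  finally have "(\<Sum>e\<in>Kedges U. w e) = real (card U - 1) * sum a U / 2" by simp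
  moreover have "card U \<ge> 1 \<or> U = {}" using fin card_0_eq by fastforce
  ultimately show ?thesis by (auto simp: of_nat_diff)
qed

theorem proposition3p2:
  fixes U :: "'a set" and r :: nat and w :: "'a set \<Rightarrow> real" and a :: "'a \<Rightarrow> real"
  assumes "finite U" and "card U = r" and "r \<ge> 4"
    and "\<forall>e\<in>Kedges U. w e > 0"
    and "\<forall>u\<in>U. a u \<ge> 0"
    and "\<forall>u\<in>U. \<forall>v\<in>U. u \<noteq> v \<longrightarrow> w {u, v} = (a u + a v) / 2"
  shows "(\<Sum>e\<in>Kedges U. w e / Cw U w e) = (real r - 1) / 2"
proof -
  have "(\<Sum>e\<in>Kedges U. w e / Cw U w e) = (\<Sum>e\<in>Kedges U. w e / sum a U)"
    by (rule sum.cong) (use assms Cw_val[of U a w] in auto)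
  also have "\<dots> = (\<Sum>e\<in>Kedges U. w e) / sum a U"
    by (simp add: sum_divide_distrib)
  also have "\<dots> = (real r - 1) / 2 * sum a U / sum a U"
    using edge_sum[of U w a] assms by simp
  also have "\<dots> = (real r - 1) / 2"
  proof -
    obtain u where u: "u \<in> U" using assms by fastforce
    have "card (U - {u}) > 0" using assms u by (simp add: card_Diff_singleton)
    then obtain v where v: "v \<in> U - {u}" by (metis card_gt_0_iff ex_in_conv)
    have "{u, v} \<in> Kedges U" using u v unfolding Kedges_def by blast
    hence "0 < w {u, v}" using assms by blast
    moreover have "w {u, v} = (a u + a v) / 2" using assms(6) u v by auto
    ultimately have pos: "0 < a u + a v" by (simp add: zero_less_divide_iff)
    have "a u + a v = sum a {u, v}" using v by (auto simp: sum.insert)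
    also have "\<dots> \<le> sum a U" using assms u v by (intro sum_mono2) auto
    finally have "sum a U \<noteq> 0" using pos by linarith
    thus ?thesis by simp
  qed
  finally show ?thesis .
qed

end
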